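(* Let $0<\lambda<1$ and $c>0$. Let $g:[0,\infty)\to[1,\infty)$, $g(x) = [1 + (1-\lambda)x]^{1/(1-\lambda)}$, and let $h(x) = \frac{W(g(x))}{\exp[c\, g(x)^{1-\lambda}]} - 1$ for $x \ge 0$. Then for every $s\in\mathbb{C}$ with $\Re(s)>0$, the Laplace transform $\mathscr{L}(s) = \int_0^\infty h(x) e^{-sx}\,dx$ equals $$\mathscr{L}(s) = \frac{c(1-\lambda)}{c(1-\lambda)+s}\,\Psi(s) - \frac1s.$$
   Context: For $x>0$ define $w(x) = \frac{c(1-\lambda)\log(x)\exp(c x^{1-\lambda})}{x^\lambda}$ and $W(x) = \sum_{p \le x} w(p)$ (sum over primes). For $\Re(s)>0$ define $\Psi(s) = \sum_p \frac{\log p}{p^\lambda \exp\left[s\,\frac{p^{1-\lambda}-1}{1-\lambda}\right]}$, the sum over all primes $p$. *)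

theory Defs
  imports "HOL-Analysis.Analysis" "HOL-Computational_Algebra.Primes"
begin

definition w :: "real \<Rightarrow> real \<Rightarrow> real \<Rightarrow> real" where
  "w c lam x = c * (1 - lam) * ln x * exp (c * x powr (1 - lam)) / x powr lam"

definition W :: "real \<Rightarrow> real \<Rightarrow> real \<Rightarrow> real" where
  "W c lam x = (\<Sum>p\<in>{p::nat. prime p \<and> real p \<le> x}. w c lam (real p))"

definition Psi :: "real \<Rightarrow> complex \<Rightarrow> complex" where
  "Psi lam s = (\<Sum>\<^sub>\<infinity>p\<in>{p::nat. prime p}.
      complex_of_real (ln (real p) / real p powr lam) /
      exp (s * complex_of_real ((real p powr (1 - lam) - 1) / (1 - lam))))"

definition g :: "real \<Rightarrow> real \<Rightarrow> real" where
  "g lam x = (1 + (1 - lam) * x) powr (1 / (1 - lam))"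

definition h :: "real \<Rightarrow> real \<Rightarrow> real \<Rightarrow> real" where
  "h c lam x = W c lam (g lam x) / exp (c * g lam x powr (1 - lam)) - 1"

end

theory Submission imports Defs begin

lemma exp_ge_pow_fact:
  fixes x :: real assumes "0 \<le> x" shows "x ^ k / fact k \<le> exp x"
proof -
  have s: "summable (\<lambda>n. x ^ n /\<^sub>R fact n)" using exp_converges sums_summable by blast
  have "sum (\<lambda>n. x ^ n /\<^sub>R fact n) {k} \<le> (\<Sum>n. x ^ n /\<^sub>R fact n)"
    by (rule sum_le_suminf[OF s]) (use assms in auto)
  thus ?thesis by (simp add: exp_def divide_inverse mult.commute)
qed

lemma key_summable:
  fixes lam b r :: real
  assumes "0 \<le> lam" "0 < b" "0 < r"
  shows "summable (\<lambda>n::nat. ln (real n) / real n powr lam * exp (-r * ((real n powr b - 1) / b)))"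
proof -
  define q where "q = r / b"
  define k where "k = nat \<lceil>3 / b\<rceil>"
  have q: "q > 0" using assms by (simp add: q_def)
  have kb: "real k * b \<ge> 3"
  proof -
    have "real k \<ge> 3 / b" unfolding k_def by linarith
    thus ?thesis using assms by (simp add: field_simps)
  qed
  define K where "K = exp (r / b) * fact k / q ^ k"
  have bound: "norm (ln (real n) / real n powr lam * exp (-r * ((real n powr b - 1) / b))) \<le> K * (1 / real n ^ 2)" if n: "n \<ge> 1" for n :: nat
  proof -
    have n1: "real n \<ge> 1" using n by simp
    have ln0: "0 \<le> ln (real n)" using n1 by simp
    have lnle: "ln (real n) \<le> real n" using n1 ln_le_minus_one[of "real n"] by linarith
    have pw: "real n powr lam \<ge> 1" using n1 assms(1) by (simp add: ge_one_powr_ge_zero)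
    have A: "ln (real n) / real n powr lam \<le> real n"
      using ln0 lnle pw by (smt (verit) divide_le_eq_1_pos div_by_1 divide_right_mono frac_le le_divide_eq_1 zero_less_one)
    have E: "exp (-r * ((real n powr b - 1) / b)) = exp (r / b) / exp (q * real n powr b)"
      using assms by (simp add: q_def field_simps exp_add[symmetric] exp_diff[symmetric] ring_distribs)
    have t: "(q * real n powr b) ^ k / fact k \<le> exp (q * real n powr b)"
      by (rule exp_ge_pow_fact) (use q in simp)
    have "(real n powr b) ^ k = real n powr (real k * b)"
      using n1 by (simp add: powr_powr[symmetric] powr_realpow mult.commute)
    also have "\<dots> \<ge> real n powr 3" using n1 kb by (intro powr_mono) auto
    finally have pk: "(real n powr b) ^ k \<ge> real n ^ 3" using n1 by (simp add: powr_realpow)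
    have "q ^ k * real n ^ 3 / fact k \<le> exp (q * real n powr b)"
      using t pk q by (smt (verit) divide_right_mono mult_left_mono power_mult_distrib zero_le_power fact_ge_zero less_imp_le)
    hence X: "exp (r / b) / exp (q * real n powr b) \<le> exp (r / b) * fact k / (q ^ k * real n ^ 3)"
      using q n1 by (simp add: field_simps)
    have "norm (ln (real n) / real n powr lam * exp (-r * ((real n powr b - 1) / b)))
        = ln (real n) / real n powr lam * (exp (r / b) / exp (q * real n powr b))"
      using ln0 E by simp
    also have "\<dots> \<le> real n * (exp (r / b) * fact k / (q ^ k * real n ^ 3))"
      using A X ln0 by (intro mult_mono) auto
    also have "\<dots> = K * (1 / real n ^ 2)" using n1 by (simp add: K_def field_simps power3_eq_cube power2_eq_square)
    finally show ?thesis .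
  qed
  have "summable (\<lambda>n::nat. K * (1 / real n ^ 2))"
    by (intro summable_mult) (simp add: inverse_eq_divide[symmetric] inverse_power_summable)
  thus ?thesis
    by (rule summable_comparison_test'[where N=1]) (use bound in auto)
qed


lemma cexp_has_integral:
  fixes z :: complex and b :: real
  assumes z: "0 < Re z"
  shows "((\<lambda>x. exp (- z * complex_of_real x)) has_integral exp (- z * of_real b) / z) {b..}"
proof -
  define f where "f = (\<lambda>k::nat. \<lambda>x::real. if x \<in> {b..b + real k} then exp (- z * complex_of_real x) else 0)"
  have z0: "z \<noteq> 0" using z by auto
  have ftc: "((\<lambda>x. exp (- z * complex_of_real x)) has_integral
      ((- exp (- z * of_real (b + real k)) / z) - (- exp (- z * of_real b) / z))) {b..b + real k}" for k
  proof (rule fundamental_theorem_of_calculus)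
    show "b \<le> b + real k" by simp
    fix x assume "x \<in> {b..b + real k}"
    have "((\<lambda>w. - exp (- z * w) / z) has_field_derivative exp (- z * of_real x)) (at (of_real x))"
      using z0 by (auto intro!: derivative_eq_intros)
    thus "((\<lambda>x. - exp (- z * complex_of_real x) / z) has_vector_derivative exp (- z * of_real x))
          (at x within {b..b + real k})"
      by (rule has_vector_derivative_real_field)
  qed
  have fk: "(f k has_integral ((- exp (- z * of_real (b + real k)) / z) - (- exp (- z * of_real b) / z))) {b..}" for k
  proof -
    have "{b..b + real k} \<subseteq> {b..}" by auto
    hence "((\<lambda>x. if x \<in> {b..b + real k} then exp (- z * complex_of_real x) else 0) has_integral
      ((- exp (- z * of_real (b + real k)) / z) - (- exp (- z * of_real b) / z))) {b..}"
      using ftc[of k] has_integral_restrict[of "{b..b + real k}" "{b..}" "\<lambda>x. exp (- z * complex_of_real x)"] by blast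
    thus ?thesis unfolding f_def .
  qed
  have nrm: "norm (exp (- z * complex_of_real x)) = exp (- Re z * x)" for x
    by (simp add: norm_exp_eq_Re)
  show ?thesis
  proof (rule has_integral_dominated_convergence[OF fk])
    show "(\<lambda>x. exp (- Re z * x)) integrable_on {b..}"
      using integrable_on_exp_minus_to_infinity[of "Re z" b] z by simp
    show "\<forall>x\<in>{b..}. norm (f k x) \<le> exp (- Re z * x)" for k
      by (auto simp: f_def nrm)
    show "\<forall>x\<in>{b..}. (\<lambda>k. f k x) \<longlonglongrightarrow> exp (- z * complex_of_real x)"
    proof
      fix x :: real assume x: "x \<in> {b..}"
      have "eventually (\<lambda>k. f k x = exp (- z * complex_of_real x)) sequentially"
      proof -
        obtain N :: nat where "real N \<ge> x - b" using real_arch_simple by blast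
        thus ?thesis using x by (auto simp: f_def eventually_at_top_linorder intro!: exI[of _ N])
      qed
      thus "(\<lambda>k. f k x) \<longlonglongrightarrow> exp (- z * complex_of_real x)"
        by (rule tendsto_eventually)
    qed
    have "(\<lambda>k. exp (- z * of_real (b + real k))) \<longlonglongrightarrow> 0"
    proof -
      have "(\<lambda>k. exp (- Re z * (b + real k))) \<longlonglongrightarrow> 0"
      proof -
        have "filterlim (\<lambda>k. - Re z * (b + real k)) at_bot sequentially"
          using z by (intro filterlim_tendsto_neg_mult_at_bot[OF tendsto_const] filterlim_tendsto_add_at_top[OF tendsto_const] filterlim_real_sequentially) auto
        thus ?thesis by (rule filterlim_compose[OF exp_at_bot])
      qed
      thus ?thesis by (subst tendsto_norm_zero_iff[symmetric]) (simp add: nrm)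
    qed
    hence "(\<lambda>k. (- exp (- z * of_real (b + real k)) / z) - (- exp (- z * of_real b) / z)) \<longlonglongrightarrow>
        (- 0 / z) - (- exp (- z * of_real b) / z)"
      using z0 by (intro tendsto_intros)
    thus "(\<lambda>k. (- exp (- z * of_real (b + real k)) / z) - (- exp (- z * of_real b) / z)) \<longlonglongrightarrow>
        exp (- z * complex_of_real b) / z" by simp
  qed
qed


lemma cexp_lebesgue:
  fixes z :: complex and b :: real
  assumes z: "0 < Re z"
  shows "set_integrable lebesgue {b..} (\<lambda>x. exp (- z * complex_of_real x))"
    and "(LINT x:{b..}|lebesgue. exp (- z * complex_of_real x)) = exp (- z * of_real b) / z"
proof -
  have hi: "((\<lambda>x. exp (- z * complex_of_real x)) has_integral exp (- z * of_real b) / z) {b..}"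
    by (rule cexp_has_integral[OF z])
  show si: "set_integrable lebesgue {b..} (\<lambda>x. exp (- z * complex_of_real x))"
  proof (rule absolutely_integrable_integrable_bound)
    show "norm (exp (- z * complex_of_real x)) \<le> exp (- Re z * x)" for x
      by (simp add: norm_exp_eq_Re)
    show "(\<lambda>x. exp (- z * complex_of_real x)) integrable_on {b..}" using hi by blast
    show "(\<lambda>x. exp (- Re z * x)) integrable_on {b..}"
      using integrable_on_exp_minus_to_infinity[of "Re z" b] z by simp
  qed
  show "(LINT x:{b..}|lebesgue. exp (- z * complex_of_real x)) = exp (- z * of_real b) / z"
    using set_lebesgue_integral_eq_integral(2)[OF si] integral_unique[OF hi] by simp
qed

lemma rexp_lebesgue:
  fixes a b :: real
  assumes a: "0 < a"
  shows "set_integrable lebesgue {b..} (\<lambda>x. exp (- a * x))"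
    and "(LINT x:{b..}|lebesgue. exp (- a * x)) = exp (- a * b) / a"
proof -
  have hi: "((\<lambda>x. exp (- a * x)) has_integral exp (- a * b) / a) {b..}"
    using has_integral_exp_minus_to_infinity[OF a] by simp
  show si: "set_integrable lebesgue {b..} (\<lambda>x. exp (- a * x))"
    by (rule nonnegative_absolutely_integrable_1) (use hi in auto)
  show "(LINT x:{b..}|lebesgue. exp (- a * x)) = exp (- a * b) / a"
    using set_lebesgue_integral_eq_integral(2)[OF si] integral_unique[OF hi] by simp
qed

lemma powr_le_iff_le_powr:
  fixes n Y b :: real
  assumes "0 \<le> n" "0 < Y" "0 < b"
  shows "n powr b \<le> Y \<longleftrightarrow> n \<le> Y powr (1 / b)"
proof
  assume "n powr b \<le> Y"
  hence "(n powr b) powr (1 / b) \<le> Y powr (1 / b)" using assms by (intro powr_mono2) auto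
  thus "n \<le> Y powr (1 / b)" using assms by (simp add: powr_powr powr_one)
next
  assume "n \<le> Y powr (1 / b)"
  hence "n powr b \<le> (Y powr (1 / b)) powr b" using assms by (intro powr_mono2) auto
  thus "n powr b \<le> Y" using assms by (simp add: powr_powr powr_one)
qed

lemma xp_le_iff:
  assumes "0 < lam" "lam < 1" "0 \<le> x"
  shows "((real n powr (1 - lam) - 1) / (1 - lam) \<le> x) \<longleftrightarrow> real n \<le> g lam x"
proof -
  have "((real n powr (1 - lam) - 1) / (1 - lam) \<le> x) \<longleftrightarrow> real n powr (1 - lam) \<le> 1 + (1 - lam) * x"
    using assms by (simp add: field_simps)
  also have "\<dots> \<longleftrightarrow> real n \<le> g lam x"
    unfolding g_def using assms by (intro powr_le_iff_le_powr) (auto simp: add_pos_nonneg)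
  finally show ?thesis .
qed

lemma g_powr:
  assumes "0 < lam" "lam < 1" "0 \<le> x"
  shows "g lam x powr (1 - lam) = 1 + (1 - lam) * x"
  using assms unfolding g_def by (simp add: powr_powr powr_one)

lemma xp_nonneg:
  assumes "0 < lam" "lam < 1" "1 \<le> n"
  shows "0 \<le> (real n powr (1 - lam) - 1) / (1 - lam)"
proof -
  have "real n powr (1 - lam) \<ge> 1" using assms by (simp add: ge_one_powr_ge_zero)
  thus ?thesis using assms by simp
qed

lemma w_ident:
  assumes "0 < lam" "lam < 1" "0 < n"
  shows "w c lam n * exp (- c) * exp (- (c * (1 - lam)) * ((n powr (1 - lam) - 1) / (1 - lam)))
       = c * (1 - lam) * (ln n / n powr lam)"
proof -
  have "exp (c * n powr (1 - lam)) * exp (- c) * exp (- (c * (1 - lam)) * ((n powr (1 - lam) - 1) / (1 - lam))) = 1"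
  proof -
    have "c * n powr (1 - lam) + - c + - (c * (1 - lam)) * ((n powr (1 - lam) - 1) / (1 - lam)) = 0"
      using assms by (simp add: field_simps)
    thus ?thesis by (metis exp_add exp_zero)
  qed
  thus ?thesis unfolding w_def by (simp add: field_simps)
qed


theorem mainTheorem10:
  fixes c lam :: real and s :: complex
  assumes "0 < lam" "lam < 1" "0 < c" "0 < Re s"
  shows "((\<lambda>x. complex_of_real (h c lam x) * exp (- s * complex_of_real x)) has_integral
          (complex_of_real (c * (1 - lam)) / (complex_of_real (c * (1 - lam)) + s) * Psi lam s - 1 / s))
         {0..}"
proof -
  note lam = assms(1,2)
  define be where "be = 1 - lam"
  define a where "a = c * be"
  define z where "z = complex_of_real a + s"
  have be: "0 < be" using lam by (simp add: be_def)
  have a: "0 < a" using be assms by (simp add: a_def)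
  have Rez: "Re z = a + Re s" by (simp add: z_def)
  have z: "0 < Re z" using a assms Rez by simp
  have z0: "z \<noteq> 0" using z by auto
  define xp where "xp = (\<lambda>n::nat. (real n powr be - 1) / be)"
  define C where "C = (\<lambda>n::nat. if prime n then w c lam (real n) * exp (- c) else 0)"
  define F where "F = (\<lambda>n::nat. \<lambda>x::real. complex_of_real (C n) * (indicator {xp n..} x *\<^sub>R exp (- z * complex_of_real x)))"
  define T where "T = (\<lambda>n::nat. if prime n then complex_of_real (ln (real n) / real n powr lam) /
      exp (s * complex_of_real ((real n powr (1 - lam) - 1) / (1 - lam))) else 0)"
  have C0: "C n \<ge> 0" for n
  proof (cases "prime n")
    case True
    hence "real n \<ge> 1" using prime_ge_1_nat by simp
    thus ?thesis using True assms by (simp add: C_def w_def)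
  qed (simp add: C_def)
  have Cid: "C n * exp (- a * xp n) = (if prime n then a * (ln (real n) / real n powr lam) else 0)" for n
  proof (cases "prime n")
    case True
    hence "real n > 0" using prime_gt_0_nat by simp
    thus ?thesis using True w_ident[OF lam, of "real n" c] by (simp add: C_def a_def xp_def be_def)
  qed (simp add: C_def)
  have Fint: "integrable lebesgue (F n)" for n
    unfolding F_def using cexp_lebesgue(1)[OF z, of "xp n"] unfolding set_integrable_def
    by (rule integrable_mult_right)
  have Fval: "integral\<^sup>L lebesgue (F n) = complex_of_real (C n) * (exp (- z * of_real (xp n)) / z)" for n
  proof -
    have "integral\<^sup>L lebesgue (F n) = complex_of_real (C n) * integral\<^sup>L lebesgue (\<lambda>x. indicator {xp n..} x *\<^sub>R exp (- z * complex_of_real x))"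
      unfolding F_def by (rule integral_mult_right_zero)
    thus ?thesis using cexp_lebesgue(2)[OF z, of "xp n"] unfolding set_lebesgue_integral_def by simp
  qed
  have Fnorm: "norm (F n x) = C n * (indicator {xp n..} x *\<^sub>R exp (- Re z * x))" for n x
    using C0[of n] by (simp add: F_def norm_mult norm_exp_eq_Re indicator_def)
  have Fnormval: "(\<integral>x. norm (F n x) \<partial>lebesgue) = C n * (exp (- Re z * xp n) / Re z)" for n
    unfolding Fnorm using rexp_lebesgue(2)[OF z, of "xp n"] unfolding set_lebesgue_integral_def by simp
  have Tnorm: "norm (T n) = ln (real n) / real n powr lam * exp (- Re s * xp n)" if pn: "prime n" for n
  proof -
    have "real n \<ge> 1" using pn prime_ge_1_nat by simp
    hence l0: "ln (real n) / real n powr lam \<ge> 0" by simp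
    have "norm (T n) = norm (complex_of_real (ln (real n) / real n powr lam)) / norm (exp (s * complex_of_real (xp n)))"
      unfolding T_def xp_def be_def by (simp only: pn if_True norm_divide)
    also have "\<dots> = ln (real n) / real n powr lam / exp (Re s * xp n)"
      using l0 by (simp only: norm_of_real norm_exp_eq_Re abs_of_nonneg) simp
    finally show ?thesis by (simp add: exp_minus divide_inverse)
  qed
  have T_summ: "summable (\<lambda>n. norm (T n))"
  proof (rule summable_comparison_test'[OF key_summable[of lam be "Re s"]])
    show "0 \<le> lam" "0 < be" "0 < Re s" using lam be assms by auto
    fix n :: nat assume "n \<ge> 0"
    show "norm (norm (T n)) \<le> ln (real n) / real n powr lam * exp (- Re s * ((real n powr be - 1) / be))"
    proof (cases "prime n")
      case True
      hence "real n \<ge> 1" using prime_ge_1_nat by simp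
      hence "ln (real n) \<ge> 0" by simp
      thus ?thesis using Tnorm[OF True] by (simp add: xp_def)
    next
      case False
      have "ln (real n) \<ge> 0" by (cases n) auto
      thus ?thesis using False by (simp add: T_def)
    qed
  qed
  have Csumm: "summable (\<lambda>n. \<integral>x. norm (F n x) \<partial>lebesgue)"
  proof -
    have eq: "C n * (exp (- Re z * xp n) / Re z) = (a / Re z) * norm (T n)" for n
    proof (cases "prime n")
      case True
      hence n1: "real n \<ge> 1" using prime_ge_1_nat by simp
      hence "ln (real n) \<ge> 0" by simp
      have "exp (- Re z * xp n) = exp (- a * xp n) * exp (- Re s * xp n)"
        by (simp add: Rez ring_distribs exp_add[symmetric])
      hence "C n * exp (- Re z * xp n) = a * (ln (real n) / real n powr lam) * exp (- Re s * xp n)"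
        using Cid[of n] True by (simp add: mult.assoc[symmetric])
      moreover have "norm (T n) = ln (real n) / real n powr lam * exp (- Re s * xp n)"
        by (rule Tnorm[OF True])
      ultimately show ?thesis by (simp add: field_simps)
    qed (simp add: C_def T_def)
    show ?thesis unfolding Fnormval eq by (intro summable_mult T_summ)
  qed
  have Fnz: "prime n \<and> 0 \<le> x \<and> real n \<le> g lam x" if "F n x \<noteq> 0" for n x
  proof -
    have pn: "prime n" using that by (auto simp: F_def C_def split: if_splits)
    hence "1 \<le> n" using prime_ge_1_nat by simp
    hence xp0: "0 \<le> xp n" using xp_nonneg[OF lam, of n] by (simp add: xp_def be_def)
    have "xp n \<le> x" using that by (auto simp: F_def indicator_def split: if_splits)
    hence x0: "0 \<le> x" using xp0 by simp
    thus ?thesis using pn xp_le_iff[OF lam x0, of n] \<open>xp n \<le> x\<close> by (simp add: xp_def be_def)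
  qed
  have Fon: "F n x = complex_of_real (w c lam (real n) * exp (- c)) * exp (- z * complex_of_real x)"
    if "prime n" "0 \<le> x" "real n \<le> g lam x" for n x
  proof -
    have "xp n \<le> x" using xp_le_iff[OF lam that(2), of n] that(3) by (simp add: xp_def be_def)
    thus ?thesis using that(1) by (simp add: F_def C_def)
  qed
  define N where "N = (\<lambda>x. {n::nat. real n \<le> g lam \<bar>x\<bar>})"
  have finN: "finite (N x)" for x
  proof -
    have "N x \<subseteq> {..nat \<lceil>g lam \<bar>x\<bar>\<rceil>}" unfolding N_def by (auto simp: nat_le_iff) linarith
    thus ?thesis using finite_subset by blast
  qed
  have outN: "F n x = 0" if "n \<notin> N x" for n x
    using Fnz[of n x] that by (cases "0 \<le> x") (auto simp: N_def)
  have summ_pt: "AE x in lebesgue. summable (\<lambda>n. norm (F n x))"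
    by (intro AE_I2 summable_finite[OF finN]) (use outN in auto)
  note IS = integrable_suminf[OF Fint summ_pt Csumm] integral_suminf[OF Fint summ_pt Csumm]
  define G where "G = (\<lambda>x. \<Sum>n. F n x)"
  have G1: "(G has_integral (\<Sum>n. integral\<^sup>L lebesgue (F n))) UNIV"
    using has_integral_integral_lebesgue[OF IS(1)] IS(2) by (simp add: G_def)
  have Gout: "G x = 0" if "x \<notin> {0..}" for x
  proof -
    have "F n x = 0" for n using Fnz[of n x] that by auto
    thus ?thesis by (simp add: G_def)
  qed
  have G2: "(G has_integral (\<Sum>n. integral\<^sup>L lebesgue (F n))) {0..}"
  proof -
    have "(\<lambda>x. if x \<in> {0..} then G x else 0) = G" using Gout by auto
    thus ?thesis using G1 has_integral_restrict_UNIV[of "{0..}" G] by simp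
  qed
  have E: "((\<lambda>x. exp (- s * complex_of_real x)) has_integral 1 / s) {0..}"
    using cexp_has_integral[OF assms(4), of 0] by simp
  have val: "(\<Sum>n. integral\<^sup>L lebesgue (F n)) = complex_of_real a / z * Psi lam s"
  proof -
    have eq: "integral\<^sup>L lebesgue (F n) = complex_of_real a / z * T n" for n
    proof (cases "prime n")
      case True
      have "exp (- z * of_real (xp n)) = complex_of_real (exp (- a * xp n)) / exp (s * of_real (xp n))"
      proof -
        have "- z * of_real (xp n) = complex_of_real (- a * xp n) + - (s * of_real (xp n))"
          by (simp add: z_def algebra_simps)
        hence "exp (- z * of_real (xp n)) = exp (complex_of_real (- a * xp n)) * exp (- (s * of_real (xp n)))"
          by (simp only: exp_add)
        thus ?thesis by (simp only: exp_of_real exp_minus divide_inverse)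
      qed
      hence "complex_of_real (C n) * exp (- z * of_real (xp n)) =
          complex_of_real (C n * exp (- a * xp n)) / exp (s * of_real (xp n))" by simp
      also have "\<dots> = complex_of_real a * T n"
        using Cid[of n] True by (simp add: T_def xp_def be_def)
      finally show ?thesis unfolding Fval by (simp add: field_simps)
    qed (simp add: Fval C_def T_def)
    have "Psi lam s = infsum T UNIV"
      unfolding Psi_def by (rule infsum_cong_neutral) (auto simp: T_def)
    also have "\<dots> = suminf T"
      by (rule infsumI[OF norm_summable_imp_has_sum[OF T_summ]])
         (rule summable_sums[OF summable_norm_cancel[OF T_summ]])
    finally have "Psi lam s = suminf T" .
    thus ?thesis unfolding eq
      by (subst suminf_mult[OF summable_norm_cancel[OF T_summ]]) simp
  qed
  have pt: "complex_of_real (h c lam x) * exp (- s * complex_of_real x) = G x - exp (- s * complex_of_real x)"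
    if x: "x \<in> {0..}" for x
  proof -
    have x0: "0 \<le> x" using x by simp
    define P where "P = {p::nat. prime p \<and> real p \<le> g lam x}"
    have PN: "P \<subseteq> N x" using x0 by (auto simp: P_def N_def)
    have finP: "finite P" using finite_subset[OF PN finN] .
    have "G x = (\<Sum>n\<in>P. F n x)"
      unfolding G_def by (rule suminf_finite[OF finP]) (use Fnz in \<open>auto simp: P_def\<close>)
    also have "\<dots> = (\<Sum>n\<in>P. complex_of_real (w c lam (real n) * exp (- c)) * exp (- z * complex_of_real x))"
      by (rule sum.cong) (use Fon x0 in \<open>auto simp: P_def simp del: of_real_mult\<close>)
    also have "\<dots> = complex_of_real (W c lam (g lam x) * exp (- c)) * exp (- z * complex_of_real x)"
      by (simp add: W_def P_def sum_distrib_right[symmetric])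
    also have "\<dots> = complex_of_real (W c lam (g lam x) * exp (- c) * exp (- a * x)) * exp (- s * complex_of_real x)"
    proof -
      have "- z * of_real x = complex_of_real (- a * x) + - s * of_real x"
        by (simp add: z_def algebra_simps)
      hence "exp (- z * of_real x) = complex_of_real (exp (- a * x)) * exp (- s * of_real x)"
        by (simp only: exp_add exp_of_real)
      thus ?thesis by (simp only: of_real_mult mult_ac)
    qed
    also have "W c lam (g lam x) * exp (- c) * exp (- a * x) = W c lam (g lam x) / exp (c * g lam x powr (1 - lam))"
    proof -
      have "exp (- c) * exp (- a * x) = inverse (exp (c * g lam x powr (1 - lam)))"
        using g_powr[OF lam x0] by (simp add: a_def be_def exp_add[symmetric] exp_minus[symmetric] ring_distribs)
      thus ?thesis by (simp add: divide_inverse mult.assoc)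
    qed
    finally show ?thesis by (simp add: h_def algebra_simps)
  qed
  have "((\<lambda>x. G x - exp (- s * complex_of_real x)) has_integral
      (complex_of_real a / z * Psi lam s - 1 / s)) {0..}"
    using has_integral_diff[OF G2 E] val by simp
  hence "((\<lambda>x. complex_of_real (h c lam x) * exp (- s * complex_of_real x)) has_integral
      (complex_of_real a / z * Psi lam s - 1 / s)) {0..}"
    by (rule has_integral_cong[THEN iffD1, rotated]) (use pt in auto)
  thus ?thesis by (simp add: a_def z_def be_def)
qed

end
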